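(* Let $n\ge2$, $\omega\in\mathbb{R}^n$ and $k\in\mathbb{R}_{>0}^n$ satisfy (IC1) $\sum_{\mu=1}^n\omega_\mu=0$, (IC2) $\omega\neq0$, and (IC3) $\left|\frac{\omega_1}{k_1}\right|\le\cdots\le\left|\frac{\omega_n}{k_n}\right|$. Then there are at most $2^n-2$ equilibria, i.e. at most $2^n-2$ points $\theta\in(-\pi,\pi]^n$ satisfying $$\omega_\nu=\frac1n\sum_{\mu=1}^n k_\nu k_\mu\sin(\theta_\nu-\theta_\mu)\quad(\nu=1,\ldots,n)\qquad\text{and}\qquad \sum_{\mu=1}^n k_\mu e^{i\theta_\mu}\in\mathbb{R}_{\ge0}.$$
   Context: The condition $\sum_\mu k_\mu e^{i\theta_\mu}\in\mathbb{R}_{\ge0}$ normalizes equilibria modulo a common shift of all angles (equilibria are counted modulo shift). *)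

theory Defs
  imports "HOL-Analysis.Analysis"
begin

text \<open>Points of (-pi,pi]^n are represented as functions theta :: nat => real,
  with components theta 1, ..., theta n, and theta mu = 0 for mu outside {1..n}
  (so that distinct points of (-pi,pi]^n correspond to distinct functions).\<close>

definition equilibria :: "nat \<Rightarrow> (nat \<Rightarrow> real) \<Rightarrow> (nat \<Rightarrow> real) \<Rightarrow> (nat \<Rightarrow> real) set" where
  "equilibria n \<omega> k = {\<theta>.
     (\<forall>\<mu>\<in>{1..n}. -pi < \<theta> \<mu> \<and> \<theta> \<mu> \<le> pi) \<and>
     (\<forall>\<mu>. \<mu> \<notin> {1..n} \<longrightarrow> \<theta> \<mu> = 0) \<and>
     (\<forall>\<nu>\<in>{1..n}. \<omega> \<nu> = (1 / real n) * (\<Sum>\<mu>=1..n. k \<nu> * k \<mu> * sin (\<theta> \<nu> - \<theta> \<mu>))) \<and>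
     (\<exists>r::real. r \<ge> 0 \<and> (\<Sum>\<mu>=1..n. complex_of_real (k \<mu>) * exp (\<i> * complex_of_real (\<theta> \<mu>))) = complex_of_real r)}"

end

theory Submission
  imports Defs "HOL-Library.Function_Algebras"
begin


lemma fun_sum_apply: "finite A \<Longrightarrow> (sum f A) x = (\<Sum>a\<in>A. f a x)"
  by (induction A rule: finite_induct) auto

lemma vs_fun: "vector_space (\<lambda>(r::real) (f::'a \<Rightarrow> real) x. r * f x)"
  by unfold_locales (auto simp: fun_eq_iff algebra_simps)

lemma dim_bound:
  fixes W :: "'s \<Rightarrow> 'a \<Rightarrow> real" and D :: "'a set" and M :: "'s set"
  assumes M: "finite M" and D: "finite D"
   and ex: "\<forall>x\<in>D. \<exists>c. \<forall>x'. (\<Sum>S\<in>M. c S * W S x') = (if x' = x then 1 else 0)"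
  shows "card D \<le> card M"
proof -
  interpret v: vector_space "\<lambda>(r::real) (f::'a \<Rightarrow> real) x. r * f x" by (rule vs_fun)
  define \<delta> where "\<delta> = (\<lambda>x::'a. \<lambda>x'. if x' = x then (1::real) else 0)"
  let ?T = "\<delta> ` D"
  have sp: "?T \<subseteq> v.span (W ` M)"
  proof
    fix v assume "v \<in> ?T"
    then obtain x where x: "x \<in> D" "v = \<delta> x" by auto
    then obtain c where c: "\<forall>x'. (\<Sum>S\<in>M. c S * W S x') = (if x' = x then 1 else 0)" using ex by blast
    have "(\<Sum>S\<in>M. (\<lambda>x'. c S * W S x')) = v"
      using c x(2) M by (auto simp: fun_eq_iff fun_sum_apply \<delta>_def)
    moreover have "(\<Sum>S\<in>M. (\<lambda>x'. c S * W S x')) \<in> v.span (W ` M)"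
      by (intro v.span_sum v.span_scale v.span_base) auto
    ultimately show "v \<in> v.span (W ` M)" by simp
  qed
  have ind: "v.independent ?T"
  proof
    assume "v.dependent ?T"
    then obtain t u where tu: "finite t" "t \<subseteq> ?T" "(\<Sum>v\<in>t. (\<lambda>x. u v * v x)) = 0" "\<exists>v\<in>t. u v \<noteq> 0"
      unfolding v.dependent_explicit by blast
    then obtain v where v: "v \<in> t" "u v \<noteq> 0" by blast
    then obtain x where x: "v = \<delta> x" using tu(2) by auto
    have "0 = (\<Sum>v\<in>t. (\<lambda>x. u v * v x)) x" using tu(3) by simp
    also have "\<dots> = (\<Sum>v'\<in>t. u v' * v' x)" using tu(1) by (simp add: fun_sum_apply)
    also have "\<dots> = (\<Sum>v'\<in>t. if v' = v then u v else 0)"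
    proof (rule sum.cong)
      fix v' assume "v' \<in> t"
      then obtain y where y: "v' = \<delta> y" using tu(2) by auto
      show "u v' * v' x = (if v' = v then u v else 0)"
      proof (cases "y = x")
        case True
        then show ?thesis using x y by (simp add: \<delta>_def)
      next
        case False
        then have "v' x = 0" "v x = 1" using x y by (auto simp: \<delta>_def)
        then show ?thesis by auto
      qed
    qed simp
    also have "\<dots> = u v" using v tu(1) by simp
    finally show False using v by simp
  qed
  have "card ?T \<le> card (W ` M)"
    using v.independent_span_bound[OF _ ind sp] M by auto
  also have "\<dots> \<le> card M" by (rule card_image_le[OF M])
  finally have "card ?T \<le> card M" .
  moreover have "inj_on \<delta> D" by (auto simp: inj_on_def \<delta>_def fun_eq_iff)
  ultimately show ?thesis by (simp add: card_image)
qed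


definition msq :: "nat set \<Rightarrow> (nat \<Rightarrow> complex) \<Rightarrow> complex" where
  "msq S z = (\<Prod>\<mu>\<in>S. z \<mu>)"

definition Vs :: "nat \<Rightarrow> (nat \<Rightarrow> real) \<Rightarrow> (nat \<Rightarrow> real) \<Rightarrow> (nat \<Rightarrow> complex) set" where
  "Vs n k b = {z. \<forall>\<mu>\<in>{1..n}. (z \<mu>)^2 + complex_of_real ((b \<mu>)^2) = (\<Sum>\<nu>=1..n. complex_of_real (k \<nu>) * z \<nu>)}"

definition inC :: "nat \<Rightarrow> (nat \<Rightarrow> real) \<Rightarrow> (nat \<Rightarrow> real) \<Rightarrow> ((nat \<Rightarrow> complex) \<Rightarrow> complex) \<Rightarrow> bool" where
  "inC n k b g \<longleftrightarrow> (\<exists>c::nat set \<Rightarrow> real. \<forall>z\<in>Vs n k b. g z = (\<Sum>S\<in>Pow {1..n}. complex_of_real (c S) * msq S z))"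

lemma inC_cong: "inC n k b g \<Longrightarrow> (\<And>z. z \<in> Vs n k b \<Longrightarrow> g z = h z) \<Longrightarrow> inC n k b h"
  unfolding inC_def by metis

lemma inC_msq: "S \<in> Pow {1..n} \<Longrightarrow> inC n k b (msq S)"
  unfolding inC_def
proof (rule exI[of _ "\<lambda>T. if T = S then 1 else 0"], intro ballI)
  fix z assume S: "S \<in> Pow {1..n}"
  have "(\<Sum>T\<in>Pow {1..n}. complex_of_real (if T = S then 1 else 0) * msq T z)
      = (\<Sum>T\<in>Pow {1..n}. if T = S then msq S z else 0)" by (rule sum.cong) auto
  also have "\<dots> = msq S z" using S by simp
  finally show "msq S z = (\<Sum>T\<in>Pow {1..n}. complex_of_real (if T = S then 1 else 0) * msq T z)" by simp
qed

lemma inC_const: "inC n k b (\<lambda>z. complex_of_real a)"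
proof -
  have "inC n k b (msq {})" by (rule inC_msq) auto
  then obtain c where c: "\<forall>z\<in>Vs n k b. msq {} z = (\<Sum>S\<in>Pow {1..n}. complex_of_real (c S) * msq S z)"
    unfolding inC_def by blast
  show ?thesis unfolding inC_def
  proof (rule exI[of _ "\<lambda>S. a * c S"], intro ballI)
    fix z assume z: "z \<in> Vs n k b"
    have "(\<Sum>S\<in>Pow {1..n}. complex_of_real (a * c S) * msq S z)
        = complex_of_real a * (\<Sum>S\<in>Pow {1..n}. complex_of_real (c S) * msq S z)"
      by (simp add: sum_distrib_left mult.assoc)
    also have "\<dots> = complex_of_real a" using c z by (simp add: msq_def)
    finally show "complex_of_real a = (\<Sum>S\<in>Pow {1..n}. complex_of_real (a * c S) * msq S z)" by simp
  qed
qed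

lemma inC_add: "inC n k b g \<Longrightarrow> inC n k b h \<Longrightarrow> inC n k b (\<lambda>z. g z + h z)"
proof -
  assume "inC n k b g" "inC n k b h"
  then obtain c d where c: "\<forall>z\<in>Vs n k b. g z = (\<Sum>S\<in>Pow {1..n}. complex_of_real (c S) * msq S z)"
    and d: "\<forall>z\<in>Vs n k b. h z = (\<Sum>S\<in>Pow {1..n}. complex_of_real (d S) * msq S z)"
    unfolding inC_def by blast
  show ?thesis unfolding inC_def
    by (rule exI[of _ "\<lambda>S. c S + d S"]) (simp add: c d sum.distrib distrib_right)
qed

lemma inC_scale: "inC n k b g \<Longrightarrow> inC n k b (\<lambda>z. complex_of_real a * g z)"
proof -
  assume "inC n k b g"
  then obtain c where c: "\<forall>z\<in>Vs n k b. g z = (\<Sum>S\<in>Pow {1..n}. complex_of_real (c S) * msq S z)"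
    unfolding inC_def by blast
  show ?thesis unfolding inC_def
    by (rule exI[of _ "\<lambda>S. a * c S"]) (simp add: c sum_distrib_left mult.assoc)
qed

lemma inC_sum: "finite A \<Longrightarrow> (\<And>i. i \<in> A \<Longrightarrow> inC n k b (g i)) \<Longrightarrow> inC n k b (\<lambda>z. \<Sum>i\<in>A. g i z)"
proof (induction A rule: finite_induct)
  case empty
  then show ?case using inC_const[of n k b 0] by simp
next
  case (insert x F)
  then show ?case using inC_add[of n k b "g x" "\<lambda>z. \<Sum>i\<in>F. g i z"] by simp
qed

lemma inC_coord_msq:
  assumes "j \<in> {1..n}" "S \<subseteq> {1..n}"
  shows "inC n k b (\<lambda>z. z j * msq S z)"
  using assms
proof (induction "card S" arbitrary: S j rule: less_induct)
  case less
  have finS: "finite S" using less.prems(2) finite_subset by blast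
  show ?case
  proof (cases "j \<in> S")
    case False
    have "inC n k b (msq (insert j S))" using less.prems by (intro inC_msq) auto
    then show ?thesis
      by (rule inC_cong) (use False finS in \<open>simp add: msq_def\<close>)
  next
    case True
    let ?S' = "S - {j}"
    have cs: "card ?S' < card S" using True finS by (meson card_Diff1_less)
    have IH: "inC n k b (\<lambda>z. z \<nu> * msq ?S' z)" if "\<nu> \<in> {1..n}" for \<nu>
      using less.hyps[OF cs that] less.prems by auto
    have "inC n k b (\<lambda>z. (\<Sum>\<nu>=1..n. complex_of_real (k \<nu>) * (z \<nu> * msq ?S' z))
              + complex_of_real (-((b j)^2)) * msq ?S' z)"
      by (intro inC_add inC_sum inC_scale IH inC_msq) (use less.prems in auto)
    then show ?thesis
    proof (rule inC_cong)
      fix z assume z: "z \<in> Vs n k b"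
      have ms: "msq S z = z j * msq ?S' z" using True finS
        by (simp add: msq_def prod.remove)
      have e: "(z j)^2 = (\<Sum>\<nu>=1..n. complex_of_real (k \<nu>) * z \<nu>) - complex_of_real ((b j)^2)"
        using z less.prems(1) unfolding Vs_def by (auto simp: algebra_simps)
      show "(\<Sum>\<nu>=1..n. complex_of_real (k \<nu>) * (z \<nu> * msq ?S' z))
              + complex_of_real (-((b j)^2)) * msq ?S' z = z j * msq S z"
        unfolding ms mult.assoc[symmetric] power2_eq_square[symmetric] e
        by (simp add: sum_distrib_right sum_distrib_left algebra_simps)
    qed
  qed
qed

lemma inC_coord:
  assumes "inC n k b g" "j \<in> {1..n}"
  shows "inC n k b (\<lambda>z. z j * g z)"
proof -
  obtain c where c: "\<forall>z\<in>Vs n k b. g z = (\<Sum>S\<in>Pow {1..n}. complex_of_real (c S) * msq S z)"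
    using assms(1) unfolding inC_def by blast
  have "inC n k b (\<lambda>z. \<Sum>S\<in>Pow {1..n}. complex_of_real (c S) * (z j * msq S z))"
    by (intro inC_sum inC_scale inC_coord_msq assms(2)) auto
  then show ?thesis
    by (rule inC_cong) (simp add: c sum_distrib_left algebra_simps)
qed

definition aff :: "nat \<Rightarrow> real \<Rightarrow> (nat \<Rightarrow> real) \<Rightarrow> (nat \<Rightarrow> complex) \<Rightarrow> complex" where
  "aff n a0 \<alpha> z = complex_of_real a0 + (\<Sum>j=1..n. complex_of_real (\<alpha> j) * z j)"

lemma inC_aff: "inC n k b g \<Longrightarrow> inC n k b (\<lambda>z. aff n a0 \<alpha> z * g z)"
proof -
  assume g: "inC n k b g"
  have "inC n k b (\<lambda>z. complex_of_real a0 * g z + (\<Sum>j=1..n. complex_of_real (\<alpha> j) * (z j * g z)))"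
    by (intro inC_add inC_scale inC_sum inC_coord g) auto
  then show ?thesis by (rule inC_cong) (simp add: aff_def distrib_right distrib_left sum_distrib_left sum_distrib_right mult_ac)
qed

lemma inC_prod: "finite A \<Longrightarrow> inC n k b g \<Longrightarrow> inC n k b (\<lambda>z. (\<Prod>q\<in>A. aff n (a0 q) (\<alpha> q) z) * g z)"
proof (induction A rule: finite_induct)
  case empty then show ?case by simp
next
  case (insert x F)
  then have "inC n k b (\<lambda>z. aff n (a0 x) (\<alpha> x) z * ((\<Prod>q\<in>F. aff n (a0 q) (\<alpha> q) z) * g z))"
    by (intro inC_aff) auto
  then show ?case using insert by (simp add: mult.assoc)
qed



lemma aff_real: "aff n a0 \<alpha> (\<lambda>\<mu>. complex_of_real (r \<mu>)) = complex_of_real (a0 + (\<Sum>j=1..n. \<alpha> j * r j))"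
  by (simp add: aff_def)

lemma aff_w: "aff n a0 \<alpha> (\<lambda>\<mu>. \<i> * complex_of_real (b \<mu>)) = complex_of_real a0 + \<i> * complex_of_real (\<Sum>j=1..n. \<alpha> j * b j)"
  by (simp add: aff_def sum_distrib_left mult_ac)

lemma sum_single: "(j::nat) \<in> {1..n} \<Longrightarrow> (\<Sum>i=1..n. (if i = j then c else 0) * r i) = c * (r j :: real)"
proof -
  assume j: "j \<in> {1..n}"
  have "(\<Sum>i=1..n. (if i = j then c else 0) * r i) = (\<Sum>i=1..n. if i = j then c * r j else 0)"
    by (rule sum.cong) auto
  also have "\<dots> = c * r j" using j by (subst sum.delta) auto
  finally show ?thesis .
qed

lemma coeff_vec:
  assumes "\<forall>z\<in>Vs n k b. g z = (\<Sum>S\<in>Pow {1..n}. complex_of_real (c S) * msq S z)"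
    and "\<forall>p\<in>F. zc p \<in> Vs n k b" and "w \<in> Vs n k b"
  shows "(\<Sum>S\<in>Pow {1..n}. c S * (case x of Inl p \<Rightarrow> if p \<in> F then Re (msq S (zc p)) else 0
          | Inr t \<Rightarrow> if t then Re (msq S w) else Im (msq S w)))
       = (case x of Inl p \<Rightarrow> if p \<in> F then Re (g (zc p)) else 0
          | Inr t \<Rightarrow> if t then Re (g w) else Im (g w))"
proof (cases x)
  case (Inl p)
  then show ?thesis using assms by (auto simp: Re_sum)
next
  case (Inr t)
  then show ?thesis using assms by (auto simp: Re_sum Im_sum)
qed

lemma count_Y:
  fixes n :: nat and k b :: "nat \<Rightarrow> real" and F :: "(nat \<Rightarrow> real) set"
  assumes finF: "finite F"
   and Fz: "\<forall>p\<in>F. \<forall>\<mu>. \<mu> \<notin> {1..n} \<longrightarrow> p \<mu> = 0"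
   and Fe: "\<forall>p\<in>F. \<forall>\<mu>\<in>{1..n}. (p \<mu>)^2 + (b \<mu>)^2 = (\<Sum>\<nu>=1..n. k \<nu> * p \<nu>)"
   and IC: "(\<Sum>\<nu>=1..n. k \<nu> * b \<nu>) = 0"
   and bnz: "\<exists>\<mu>\<in>{1..n}. b \<mu> \<noteq> 0"
  shows "card F + 2 \<le> 2^n"
proof -
  define zc where "zc = (\<lambda>(p::nat\<Rightarrow>real) \<mu>. complex_of_real (p \<mu>))"
  define w where "w = (\<lambda>\<mu>. \<i> * complex_of_real (b \<mu>))"
  define lam where "lam = (\<lambda>p. \<Sum>\<nu>=1..n. k \<nu> * p \<nu>)"
  obtain j0 where j0: "j0 \<in> {1..n}" "b j0 \<noteq> 0" using bnz by blast
  have lam_pos: "lam p > 0" if "p \<in> F" for p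
  proof -
    have "lam p = (p j0)^2 + (b j0)^2" using Fe that j0 by (auto simp: lam_def)
    moreover have "(b j0)^2 > 0" using j0 by simp
    ultimately show ?thesis by (smt (verit) zero_le_power2)
  qed
  have zcV: "\<forall>p\<in>F. zc p \<in> Vs n k b"
  proof
    fix p assume p: "p \<in> F"
    show "zc p \<in> Vs n k b" unfolding Vs_def zc_def
    proof (intro CollectI ballI)
      fix \<mu> assume "\<mu> \<in> {1..n}"
      then have "(p \<mu>)^2 + (b \<mu>)^2 = (\<Sum>\<nu>=1..n. k \<nu> * p \<nu>)" using Fe p by blast
      then have "complex_of_real ((p \<mu>)^2 + (b \<mu>)^2) = complex_of_real (\<Sum>\<nu>=1..n. k \<nu> * p \<nu>)" by simp
      then show "(complex_of_real (p \<mu>))^2 + complex_of_real ((b \<mu>)^2) = (\<Sum>\<nu>=1..n. complex_of_real (k \<nu>) * complex_of_real (p \<nu>))"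
        by simp
    qed
  qed
  have wV: "w \<in> Vs n k b" unfolding Vs_def w_def
  proof (intro CollectI ballI)
    fix \<mu> assume "\<mu> \<in> {1..n}"
    have "(\<Sum>\<nu>=1..n. complex_of_real (k \<nu>) * (\<i> * complex_of_real (b \<nu>))) = \<i> * complex_of_real (\<Sum>\<nu>=1..n. k \<nu> * b \<nu>)"
      by (simp add: sum_distrib_left mult_ac)
    also have "\<dots> = 0" using IC by simp
    finally show "(\<i> * complex_of_real (b \<mu>))^2 + complex_of_real ((b \<mu>)^2) = (\<Sum>\<nu>=1..n. complex_of_real (k \<nu>) * (\<i> * complex_of_real (b \<nu>)))"
      by (simp add: power_mult_distrib)
  qed
  have affw: "aff n a0 (\<lambda>i. c * k i) w = complex_of_real a0" for a0 c
  proof -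
    have "(\<Sum>j=1..n. c * k j * b j) = c * (\<Sum>j=1..n. k j * b j)" by (simp add: sum_distrib_left mult_ac)
    then show ?thesis using IC unfolding w_def aff_w by simp
  qed
  have affr: "aff n a0 \<alpha> (zc r) = complex_of_real (a0 + (\<Sum>j=1..n. \<alpha> j * r j))" for a0 \<alpha> r
    unfolding zc_def by (rule aff_real)
  have affl: "aff n a0 (\<lambda>i. c * k i) (zc r) = complex_of_real (a0 + c * lam r)" for a0 c r
    unfolding affr lam_def by (simp add: sum_distrib_left mult_ac)
  define jsel where "jsel = (\<lambda>p q. SOME j. j \<in> {1..n} \<and> p j \<noteq> (q j::real))"
  have jsel: "jsel p q \<in> {1..n} \<and> p (jsel p q) \<noteq> q (jsel p q)" if pq: "p \<in> F" "q \<in> F" "p \<noteq> q" for p q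
  proof -
    obtain j where "p j \<noteq> q j" using pq(3) by (meson ext)
    then have "j \<in> {1..n}" using Fz pq by (metis)
    then show ?thesis unfolding jsel_def using \<open>p j \<noteq> q j\<close> by (metis (mono_tags, lifting) someI)
  qed
  define A0 where "A0 = (\<lambda>p q. - q (jsel p q) / (p (jsel p q) - q (jsel p q)))"
  define Al where "Al = (\<lambda>p q i. if i = jsel p q then 1 / (p (jsel p q) - q (jsel p q)) else 0)"
  have fac: "aff n (A0 p q) (Al p q) (zc r) = complex_of_real ((r (jsel p q) - q (jsel p q)) / (p (jsel p q) - q (jsel p q)))"
    if "p \<in> F" "q \<in> F" "p \<noteq> q" for p q r
  proof -
    have "(\<Sum>i=1..n. Al p q i * r i) = 1 / (p (jsel p q) - q (jsel p q)) * r (jsel p q)"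
      unfolding Al_def using jsel[OF that] by (intro sum_single) auto
    then show ?thesis unfolding affr A0_def by (simp add: diff_divide_distrib)
  qed
  define gp where "gp = (\<lambda>p z. (\<Prod>q\<in>F-{p}. aff n (A0 p q) (Al p q) z) * (aff n 0 (\<lambda>i. (1 / lam p) * k i) z * 1))"
  define P where "P = (\<lambda>z. \<Prod>p\<in>F. aff n 1 (\<lambda>i. (- 1 / lam p) * k i) z)"
  define h1 where "h1 = (\<lambda>z. P z * 1)"
  define h2 where "h2 = (\<lambda>z. P z * (aff n 0 (\<lambda>i. if i = j0 then 1 / b j0 else 0) z * 1))"
  have gp_C: "inC n k b (gp p)" for p
    unfolding gp_def using finF by (intro inC_prod inC_aff) (auto intro: inC_const[of _ _ _ 1, simplified])
  have h1_C: "inC n k b h1"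
    unfolding h1_def P_def using finF by (intro inC_prod) (auto intro: inC_const[of _ _ _ 1, simplified])
  have h2_C: "inC n k b h2"
    unfolding h2_def P_def using finF by (intro inC_prod inC_aff) (auto intro: inC_const[of _ _ _ 1, simplified])
  have P_r: "P (zc r) = 0" if "r \<in> F" for r
  proof -
    have "aff n 1 (\<lambda>i. (- 1 / lam r) * k i) (zc r) = 0"
      unfolding affl using lam_pos[OF that] by simp
    then show ?thesis unfolding P_def using finF that by (meson prod_zero_iff)
  qed
  have P_w: "P w = 1" unfolding P_def affw by simp
  have gp_w: "gp p w = 0" for p unfolding gp_def affw by simp
  have gp_r: "gp p (zc r) = (if r = p then 1 else 0)" if "p \<in> F" "r \<in> F" for p r
  proof (cases "r = p")
    case True
    have "(\<Prod>q\<in>F-{p}. aff n (A0 p q) (Al p q) (zc r)) = (\<Prod>q\<in>F-{p}. 1)"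
    proof (rule prod.cong)
      fix q assume q: "q \<in> F - {p}"
      then have "p (jsel p q) - q (jsel p q) \<noteq> 0" using jsel[of p q] that by auto
      then show "aff n (A0 p q) (Al p q) (zc r) = 1" using fac[of p q r] q that True by auto
    qed simp
    moreover have "aff n 0 (\<lambda>i. (1 / lam p) * k i) (zc r) = 1"
      unfolding affl using lam_pos[OF that(1)] True by simp
    ultimately show ?thesis unfolding gp_def using True by simp
  next
    case False
    have "aff n (A0 p r) (Al p r) (zc r) = 0" using fac[of p r r] that False by auto
    then have "(\<Prod>q\<in>F-{p}. aff n (A0 p q) (Al p q) (zc r)) = 0"
      using finF that False by (meson DiffI prod_zero_iff singletonD finite_Diff)
    then show ?thesis unfolding gp_def using False by simp
  qed
  have h2_w: "h2 w = \<i>"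
  proof -
    have "(\<Sum>j=1..n. (if j = j0 then 1 / b j0 else 0) * b j) = 1 / b j0 * b j0"
      using j0 by (intro sum_single) auto
    then show ?thesis unfolding h2_def P_w unfolding w_def aff_w using j0 by simp
  qed
  define W where "W = (\<lambda>S x. case x of Inl p \<Rightarrow> if p \<in> F then Re (msq S (zc p)) else 0
          | Inr t \<Rightarrow> if t then Re (msq S w) else Im (msq S w))"
  define D :: "((nat \<Rightarrow> real) + bool) set" where "D = Inl ` F \<union> Inr ` UNIV"
  have ex: "\<forall>x\<in>D. \<exists>c. \<forall>x'. (\<Sum>S\<in>Pow {1..n}. c S * W S x') = (if x' = x then 1 else 0)"
  proof
    fix x assume x: "x \<in> D"
    obtain g where g: "inC n k b g"
      and gv: "\<forall>x'. (case x' of Inl p \<Rightarrow> if p \<in> F then Re (g (zc p)) else 0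
          | Inr t \<Rightarrow> if t then Re (g w) else Im (g w)) = (if x' = x then 1 else 0)"
    proof (cases x)
      case (Inl p)
      then have p: "p \<in> F" using x by (auto simp: D_def)
      show ?thesis
      proof (rule that[OF gp_C[of p]], intro allI)
        fix x' show "(case x' of Inl r \<Rightarrow> if r \<in> F then Re (gp p (zc r)) else 0
          | Inr t \<Rightarrow> if t then Re (gp p w) else Im (gp p w)) = (if x' = x then 1 else 0)"
          using p Inl gp_r gp_w by (cases x') auto
      qed
    next
      case (Inr t)
      show ?thesis
      proof (cases t)
        case True
        show ?thesis
        proof (rule that[OF h1_C], intro allI)
          fix x' show "(case x' of Inl r \<Rightarrow> if r \<in> F then Re (h1 (zc r)) else 0
            | Inr t \<Rightarrow> if t then Re (h1 w) else Im (h1 w)) = (if x' = x then 1 else 0)"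
            using Inr True P_r P_w by (cases x') (auto simp: h1_def)
        qed
      next
        case False
        show ?thesis
        proof (rule that[OF h2_C], intro allI)
          fix x' show "(case x' of Inl r \<Rightarrow> if r \<in> F then Re (h2 (zc r)) else 0
            | Inr t \<Rightarrow> if t then Re (h2 w) else Im (h2 w)) = (if x' = x then 1 else 0)"
            using Inr False P_r h2_w by (cases x') (auto simp: h2_def)
        qed
      qed
    qed
    from g obtain c where c: "\<forall>z\<in>Vs n k b. g z = (\<Sum>S\<in>Pow {1..n}. complex_of_real (c S) * msq S z)"
      unfolding inC_def by blast
    show "\<exists>c. \<forall>x'. (\<Sum>S\<in>Pow {1..n}. c S * W S x') = (if x' = x then 1 else 0)"
      by (rule exI[of _ c]) (use coeff_vec[OF c zcV wV] gv in \<open>simp add: W_def\<close>)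
  qed
  have "card D \<le> card (Pow {1..n::nat})"
    by (rule dim_bound[OF _ _ ex]) (use finF in \<open>auto simp: D_def\<close>)
  moreover have "card D = card F + 2"
  proof -
    have "card D = card (Inl ` F :: ((nat \<Rightarrow> real) + bool) set) + card (Inr ` (UNIV::bool set) :: ((nat \<Rightarrow> real) + bool) set)"
      unfolding D_def using finF by (intro card_Un_disjoint) auto
    also have "\<dots> = card F + card (UNIV :: bool set)"
      by (simp add: card_image)
    finally show ?thesis by simp
  qed
  ultimately show ?thesis by (simp add: card_Pow)
qed



lemma angle_eq:
  assumes "-pi < a" "a \<le> pi" "-pi < c" "c \<le> pi" "cos a = cos c" "sin a = sin c"
  shows "a = c"
proof -
  have "cis a = cis c" using assms by (simp add: complex_eq_iff)
  then have "Arg (cis a) = Arg (cis c)" by simp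
  then show ?thesis using assms by (simp add: Arg_cis)
qed

theorem theorem3:
  fixes n :: nat and \<omega> k :: "nat \<Rightarrow> real"
  assumes "n \<ge> 2"
    and "\<forall>\<mu>\<in>{1..n}. k \<mu> > 0"
    and IC1: "(\<Sum>\<mu>=1..n. \<omega> \<mu>) = 0"
    and IC2: "\<exists>\<mu>\<in>{1..n}. \<omega> \<mu> \<noteq> 0"
    and IC3: "\<forall>\<mu>\<in>{1..<n}. \<bar>\<omega> \<mu> / k \<mu>\<bar> \<le> \<bar>\<omega> (\<mu>+1) / k (\<mu>+1)\<bar>"
  shows "finite (equilibria n \<omega> k) \<and> card (equilibria n \<omega> k) \<le> 2 ^ n - 2"
proof -
  note kpos = assms(2)
  have npos: "real n > 0" using assms(1) by simp
  define E where "E = equilibria n \<omega> k"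
  define b where "b = (\<lambda>\<mu>. real n * \<omega> \<mu> / k \<mu>)"
  define R where "R = (\<lambda>\<theta>. \<Sum>\<mu>=1..n. k \<mu> * cos (\<theta> \<mu>))"
  define y where "y = (\<lambda>\<theta> \<mu>. if \<mu> \<in> {1..n} then R \<theta> * cos (\<theta> \<mu>) else 0)"
  have bsin: "b \<nu> = R \<theta> * sin (\<theta> \<nu>)" and Rnn: "R \<theta> \<ge> 0"
    if th: "\<theta> \<in> E" and nu: "\<nu> \<in> {1..n}" for \<theta> \<nu>
  proof -
    from th obtain r where r: "r \<ge> 0"
      and sum: "(\<Sum>\<mu>=1..n. complex_of_real (k \<mu>) * exp (\<i> * complex_of_real (\<theta> \<mu>))) = complex_of_real r"
      and eq: "\<forall>\<nu>\<in>{1..n}. \<omega> \<nu> = (1 / real n) * (\<Sum>\<mu>=1..n. k \<nu> * k \<mu> * sin (\<theta> \<nu> - \<theta> \<mu>))"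
      unfolding E_def equilibria_def by blast
    have sum': "(\<Sum>\<mu>=1..n. complex_of_real (k \<mu>) * cis (\<theta> \<mu>)) = complex_of_real r"
      using sum by (simp add: cis_conv_exp)
    have Re: "R \<theta> = r"
      using arg_cong[OF sum', of Re] by (simp add: Re_sum R_def)
    have Im: "(\<Sum>\<mu>=1..n. k \<mu> * sin (\<theta> \<mu>)) = 0"
      using arg_cong[OF sum', of Im] by (simp add: Im_sum)
    show "R \<theta> \<ge> 0" using Re r by simp
    have "\<omega> \<nu> = (1 / real n) * (\<Sum>\<mu>=1..n. k \<nu> * k \<mu> * (sin (\<theta> \<nu>) * cos (\<theta> \<mu>) - cos (\<theta> \<nu>) * sin (\<theta> \<mu>)))"
      using eq nu by (simp add: sin_diff)
    also have "\<dots> = (1 / real n) * k \<nu> * (sin (\<theta> \<nu>) * R \<theta> - cos (\<theta> \<nu>) * (\<Sum>\<mu>=1..n. k \<mu> * sin (\<theta> \<mu>)))"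
      by (simp add: R_def sum_distrib_left sum_subtractf algebra_simps)
    also have "\<dots> = (1 / real n) * k \<nu> * (sin (\<theta> \<nu>) * R \<theta>)" using Im by simp
    finally have "\<omega> \<nu> = (1 / real n) * k \<nu> * (sin (\<theta> \<nu>) * R \<theta>)" .
    moreover have kn: "k \<nu> > 0" using kpos nu by auto
    ultimately show "b \<nu> = R \<theta> * sin (\<theta> \<nu>)"
      using npos unfolding b_def by (simp add: field_simps)
  qed
  obtain \<mu>0 where mu0: "\<mu>0 \<in> {1..n}" "\<omega> \<mu>0 \<noteq> 0" using IC2 by blast
  have "k \<mu>0 > 0" using mu0 kpos by auto
  then have bnz: "b \<mu>0 \<noteq> 0" using mu0 npos by (auto simp: b_def)
  have Rpos: "R \<theta> > 0" if "\<theta> \<in> E" for \<theta>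
    using bsin[OF that mu0(1)] Rnn[OF that mu0(1)] bnz by fastforce
  have ICb: "(\<Sum>\<nu>=1..n. k \<nu> * b \<nu>) = 0"
  proof -
    have "(\<Sum>\<nu>=1..n. k \<nu> * b \<nu>) = (\<Sum>\<nu>=1..n. real n * \<omega> \<nu>)"
    proof (rule sum.cong)
      fix x assume "x \<in> {1..n}"
      then have "k x > 0" using kpos by blast
      then show "k x * b x = real n * \<omega> x" by (simp add: b_def)
    qed simp
    also have "\<dots> = 0" using IC1 by (simp add: sum_distrib_left[symmetric])
    finally show ?thesis .
  qed
  have ysum: "(\<Sum>\<nu>=1..n. k \<nu> * y \<theta> \<nu>) = (R \<theta>)^2" for \<theta>
  proof -
    have "(\<Sum>\<nu>=1..n. k \<nu> * y \<theta> \<nu>) = (\<Sum>\<nu>=1..n. R \<theta> * (k \<nu> * cos (\<theta> \<nu>)))"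
      by (rule sum.cong) (auto simp: y_def)
    also have "\<dots> = (R \<theta>)^2" by (simp add: sum_distrib_left[symmetric] R_def power2_eq_square)
    finally show ?thesis .
  qed
  have inj: "inj_on y E"
  proof (rule inj_onI)
    fix \<theta> \<theta>' assume th: "\<theta> \<in> E" and th': "\<theta>' \<in> E" and yy: "y \<theta> = y \<theta>'"
    have "(R \<theta>)^2 = (R \<theta>')^2" using ysum[of \<theta>] ysum[of \<theta>'] yy by simp
    then have RR: "R \<theta> = R \<theta>'" using Rnn[OF th mu0(1)] Rnn[OF th' mu0(1)] by (auto simp: power2_eq_iff)
    show "\<theta> = \<theta>'"
    proof
      fix \<mu>
      show "\<theta> \<mu> = \<theta>' \<mu>"
      proof (cases "\<mu> \<in> {1..n}")
        case True
        have "R \<theta> * cos (\<theta> \<mu>) = R \<theta> * cos (\<theta>' \<mu>)"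
          using fun_cong[OF yy, of \<mu>] True RR by (simp add: y_def)
        then have c: "cos (\<theta> \<mu>) = cos (\<theta>' \<mu>)" using Rpos[OF th] by simp
        have "R \<theta> * sin (\<theta> \<mu>) = R \<theta> * sin (\<theta>' \<mu>)"
          using bsin[OF th True] bsin[OF th' True] RR by metis
        then have s: "sin (\<theta> \<mu>) = sin (\<theta>' \<mu>)" using Rpos[OF th] by simp
        have "-pi < \<theta> \<mu> \<and> \<theta> \<mu> \<le> pi" "-pi < \<theta>' \<mu> \<and> \<theta>' \<mu> \<le> pi"
          using th th' True unfolding E_def equilibria_def by auto
        then show ?thesis using angle_eq c s by blast
      next
        case False
        then show ?thesis using th th' unfolding E_def equilibria_def by auto
      qed
    qed
  qed
  have bound: "card F + 2 \<le> 2^n" if F: "finite F" "F \<subseteq> y ` E" for F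
  proof (rule count_Y[OF F(1) _ _ ICb])
    show "\<forall>p\<in>F. \<forall>\<mu>. \<mu> \<notin> {1..n} \<longrightarrow> p \<mu> = 0" using F(2) by (auto simp: y_def)
    show "\<exists>\<mu>\<in>{1..n}. b \<mu> \<noteq> 0" using mu0 bnz by blast
    show "\<forall>p\<in>F. \<forall>\<mu>\<in>{1..n}. (p \<mu>)^2 + (b \<mu>)^2 = (\<Sum>\<nu>=1..n. k \<nu> * p \<nu>)"
    proof (intro ballI)
      fix p \<mu> assume p: "p \<in> F" and mu: "\<mu> \<in> {1..n}"
      then obtain \<theta> where th: "\<theta> \<in> E" and pth: "p = y \<theta>" using F(2) by blast
      have "(p \<mu>)^2 + (b \<mu>)^2 = (R \<theta>)^2 * ((cos (\<theta> \<mu>))^2 + (sin (\<theta> \<mu>))^2)"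
        using mu bsin[OF th mu] by (simp add: pth y_def power_mult_distrib flip: distrib_left)
      also have "\<dots> = (\<Sum>\<nu>=1..n. k \<nu> * p \<nu>)"
        by (simp only: sin_cos_squared_add2 mult_1_right pth ysum)
      finally show "(p \<mu>)^2 + (b \<mu>)^2 = (\<Sum>\<nu>=1..n. k \<nu> * p \<nu>)" .
    qed
  qed
  have finY: "finite (y ` E)"
  proof (rule ccontr)
    assume "infinite (y ` E)"
    then obtain F where "F \<subseteq> y ` E" "finite F" "card F = 2^n"
      using infinite_arbitrarily_large by blast
    then show False using bound by fastforce
  qed
  have finE: "finite E" using finY inj finite_imageD by blast
  have "card E + 2 \<le> 2^n" using bound[OF finY] card_image[OF inj] by simp
  then show ?thesis using finE unfolding E_def by simp
qed

end
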